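(* Let $(L_i)_{i\in I}$ be a family of lattices with zero, pairwise intersecting in $\{0\}$, and let $L=\coprod^0_{i\in I}L_i$ with each $L_i$ identified with its canonical copy in $L$. For each $i$, let $\varepsilon_i\colon\operatorname{Id}L_i\to\operatorname{Id}L$, $X\mapsto L\mathbin{\downarrow}X=\{y\in L:(\exists x\in X)(y\le x)\}$. Let $\mathbf{p}$ be a lattice term with variables from $I\times\omega$ and let $\vec X=(X_{i,n})_{(i,n)\in I\times\omega}\in\prod_{(i,n)\in I\times\omega}\operatorname{Id}L_i$, and put $\vec\varepsilon\vec X=(\varepsilon_i(X_{i,n}))_{(i,n)\in I\times\omega}\in(\operatorname{Id}L)^{I\times\omega}$. Then, evaluating $\mathbf{p}$ in $\operatorname{Id}L$, $$\mathbf{p}(\vec\varepsilon\vec X)=L\mathbin{\downarrow}\{\mathbf{p}(\vec x): \vec x=(x_{i,n}),\ x_{i,n}\in X_{i,n}\text{ for all }(i,n)\in I\times\omega\},$$ where $\mathbf{p}(\vec x)$ is evaluated in $L$.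
   Context: $\coprod^0$ denotes the coproduct in the category of lattices with zero and zero-preserving homomorphisms; $\omega$ is the set of natural numbers. $\operatorname{Id}K$ is the lattice of all ideals (nonempty lower subsets closed under finite joins) of a lattice $K$, ordered by inclusion. *)

theory Defs
  imports Main
begin

datatype 'v lterm = Var 'v | Join "'v lterm" "'v lterm" | Meet "'v lterm" "'v lterm"

fun eval_lat :: "('v \<Rightarrow> 'b::lattice) \<Rightarrow> 'v lterm \<Rightarrow> 'b" where
  "eval_lat \<rho> (Var v) = \<rho> v"
| "eval_lat \<rho> (Join p q) = sup (eval_lat \<rho> p) (eval_lat \<rho> q)"
| "eval_lat \<rho> (Meet p q) = inf (eval_lat \<rho> p) (eval_lat \<rho> q)"

definition ideal_in :: "'a::lattice set \<Rightarrow> 'a set \<Rightarrow> bool" where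
  "ideal_in S X \<longleftrightarrow> X \<subseteq> S \<and> X \<noteq> {} \<and>
     (\<forall>x\<in>X. \<forall>y\<in>S. y \<le> x \<longrightarrow> y \<in> X) \<and>
     (\<forall>x\<in>X. \<forall>y\<in>X. sup x y \<in> X)"

text \<open>Down-set generated by a subset of 'a (that is, L \<down> A, with L = UNIV).\<close>
definition down :: "'a::order set \<Rightarrow> 'a set" where
  "down A = {y. \<exists>x\<in>A. y \<le> x}"

text \<open>Join and meet in Id L (L = UNIV of type 'a), ordered by inclusion.\<close>
definition id_join :: "'a::lattice set \<Rightarrow> 'a set \<Rightarrow> 'a set" where
  "id_join I J = \<Inter>{K. ideal_in UNIV K \<and> I \<union> J \<subseteq> K}"

definition id_meet :: "'a::lattice set \<Rightarrow> 'a set \<Rightarrow> 'a set" where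
  "id_meet I J = I \<inter> J"

fun eval_id :: "('v \<Rightarrow> 'a::lattice set) \<Rightarrow> 'v lterm \<Rightarrow> 'a set" where
  "eval_id \<rho> (Var v) = \<rho> v"
| "eval_id \<rho> (Join p q) = id_join (eval_id \<rho> p) (eval_id \<rho> q)"
| "eval_id \<rho> (Meet p q) = id_meet (eval_id \<rho> p) (eval_id \<rho> q)"

definition is_lub :: "('k \<Rightarrow> 'k \<Rightarrow> bool) \<Rightarrow> 'k set \<Rightarrow> 'k \<Rightarrow> 'k \<Rightarrow> 'k \<Rightarrow> bool" where
  "is_lub le K a b c \<longleftrightarrow> c \<in> K \<and> le a c \<and> le b c \<and>
     (\<forall>d\<in>K. le a d \<and> le b d \<longrightarrow> le c d)"

definition is_glb :: "('k \<Rightarrow> 'k \<Rightarrow> bool) \<Rightarrow> 'k set \<Rightarrow> 'k \<Rightarrow> 'k \<Rightarrow> 'k \<Rightarrow> bool" where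
  "is_glb le K a b c \<longleftrightarrow> c \<in> K \<and> le c a \<and> le c b \<and>
     (\<forall>d\<in>K. le d a \<and> le d b \<longrightarrow> le d c)"

definition is_least :: "('k \<Rightarrow> 'k \<Rightarrow> bool) \<Rightarrow> 'k set \<Rightarrow> 'k \<Rightarrow> bool" where
  "is_least le K z \<longleftrightarrow> z \<in> K \<and> (\<forall>d\<in>K. le z d)"

definition lattice0_on :: "'k set \<Rightarrow> ('k \<Rightarrow> 'k \<Rightarrow> bool) \<Rightarrow> bool" where
  "lattice0_on K le \<longleftrightarrow>
     (\<forall>a\<in>K. le a a) \<and>
     (\<forall>a\<in>K. \<forall>b\<in>K. le a b \<and> le b a \<longrightarrow> a = b) \<and>
     (\<forall>a\<in>K. \<forall>b\<in>K. \<forall>c\<in>K. le a b \<and> le b c \<longrightarrow> le a c) \<and>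
     (\<forall>a\<in>K. \<forall>b\<in>K. \<exists>c. is_lub le K a b c) \<and>
     (\<forall>a\<in>K. \<forall>b\<in>K. \<exists>c. is_glb le K a b c) \<and>
     (\<exists>z. is_least le K z)"

definition hom0_on :: "'a::bounded_lattice_bot set \<Rightarrow> 'k set \<Rightarrow> ('k \<Rightarrow> 'k \<Rightarrow> bool)
    \<Rightarrow> ('a \<Rightarrow> 'k) \<Rightarrow> bool" where
  "hom0_on S K le f \<longleftrightarrow>
     (\<forall>x\<in>S. f x \<in> K) \<and>
     (\<forall>x\<in>S. \<forall>y\<in>S. is_lub le K (f x) (f y) (f (sup x y))) \<and>
     (\<forall>x\<in>S. \<forall>y\<in>S. is_glb le K (f x) (f y) (f (inf x y))) \<and>
     is_least le K (f bot)"

definition sublattice0 :: "'a::bounded_lattice_bot set \<Rightarrow> bool" where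
  "sublattice0 S \<longleftrightarrow> bot \<in> S \<and> (\<forall>x\<in>S. \<forall>y\<in>S. sup x y \<in> S \<and> inf x y \<in> S)"

text \<open>The whole lattice with zero 'a is the 0-coproduct of the sublattices LL i
  (with inclusion maps as canonical maps), with respect to target lattices with zero
  whose carrier lies in the type 'k.\<close>
definition is_coproduct0 :: "('i \<Rightarrow> 'a::bounded_lattice_bot set) \<Rightarrow> 'k itself \<Rightarrow> bool" where
  "is_coproduct0 LL _ \<longleftrightarrow>
     (\<forall>i. sublattice0 (LL i)) \<and>
     (\<forall>(K::'k set) le g. lattice0_on K le \<and> (\<forall>i. hom0_on (LL i) K le (g i)) \<longrightarrow>
        (\<exists>!f. hom0_on UNIV K le f \<and> (\<forall>i. \<forall>x\<in>LL i. f x = g i x)))"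

end

theory Submission
  imports Defs
begin

lemma eval_mono:
  fixes x y :: "'v \<Rightarrow> 'a::lattice"
  assumes "\<And>v. x v \<le> y v"
  shows "eval_lat x p \<le> eval_lat y p"
  using assms by (induction p) (auto intro: le_supI1 le_supI2 le_infI1 le_infI2)

lemma down_ideal:
  fixes S :: "'a::lattice set"
  assumes ne: "S \<noteq> {}" and dir: "\<And>a b. a \<in> S \<Longrightarrow> b \<in> S \<Longrightarrow> \<exists>c\<in>S. a \<le> c \<and> b \<le> c"
  shows "ideal_in UNIV (down S)"
  unfolding ideal_in_def down_def
proof (intro conjI ballI impI)
  show "{y. \<exists>x\<in>S. y \<le> x} \<noteq> {}" using ne by auto
next
  fix x y assume "x \<in> {y. \<exists>x\<in>S. y \<le> x}" "y \<in> (UNIV::'a set)" "y \<le> x"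
  then show "y \<in> {y. \<exists>x\<in>S. y \<le> x}" using order_trans by blast
next
  fix x y assume "x \<in> {y. \<exists>x\<in>S. y \<le> x}" "y \<in> {y. \<exists>x\<in>S. y \<le> x}"
  then obtain a b where "a \<in> S" "b \<in> S" "x \<le> a" "y \<le> b" by auto
  then obtain c where "c \<in> S" "a \<le> c" "b \<le> c" using dir by blast
  then have "sup x y \<le> c" using \<open>x \<le> a\<close> \<open>y \<le> b\<close> by (meson le_sup_iff order_trans)
  then show "sup x y \<in> {y. \<exists>x\<in>S. y \<le> x}" using \<open>c \<in> S\<close> by auto
qed auto

lemma id_join_ideals:
  fixes I J :: "'a::lattice set"
  assumes I: "ideal_in UNIV I" and J: "ideal_in UNIV J"
  shows "id_join I J = {z. \<exists>a\<in>I. \<exists>b\<in>J. z \<le> sup a b}"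
proof -
  let ?K = "{z. \<exists>a\<in>I. \<exists>b\<in>J. z \<le> sup a b}"
  obtain a0 where a0: "a0 \<in> I" using I unfolding ideal_in_def by auto
  obtain b0 where b0: "b0 \<in> J" using J unfolding ideal_in_def by auto
  have Kid: "ideal_in UNIV ?K"
    unfolding ideal_in_def
  proof (intro conjI ballI impI)
    show "?K \<noteq> {}" using a0 b0 by auto
  next
    fix x y assume "x \<in> ?K" "y \<le> x"
    then show "y \<in> ?K" using order_trans by blast
  next
    fix x y assume "x \<in> ?K" "y \<in> ?K"
    then obtain a b a' b' where "a \<in> I" "b \<in> J" "a' \<in> I" "b' \<in> J"
      "x \<le> sup a b" "y \<le> sup a' b'" by auto
    moreover have "sup a a' \<in> I" "sup b b' \<in> J" using I J calculation
      unfolding ideal_in_def by auto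
    moreover have "sup x y \<le> sup (sup a a') (sup b b')"
      using calculation by (meson inf_sup_ord le_sup_iff order_trans sup_mono)
    ultimately show "sup x y \<in> ?K" by blast
  qed auto
  have sub: "I \<union> J \<subseteq> ?K"
  proof
    fix z assume "z \<in> I \<union> J"
    then show "z \<in> ?K"
    proof
      assume "z \<in> I" then show ?thesis using b0 by (metis (mono_tags, lifting) mem_Collect_eq sup_ge1)
    next
      assume "z \<in> J" then show ?thesis using a0 by (metis (mono_tags, lifting) mem_Collect_eq sup_ge2)
    qed
  qed
  have "?K \<subseteq> K" if "ideal_in UNIV K" "I \<union> J \<subseteq> K" for K
  proof
    fix z assume "z \<in> ?K"
    then obtain a b where "a \<in> I" "b \<in> J" "z \<le> sup a b" by auto
    then have "sup a b \<in> K" using that unfolding ideal_in_def by blast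
    then show "z \<in> K" using that \<open>z \<le> sup a b\<close> unfolding ideal_in_def by blast
  qed
  then show ?thesis unfolding id_join_def using Kid sub by blast
qed

lemma main_gen:
  fixes X :: "'v \<Rightarrow> 'a::lattice set"
  assumes ne: "\<And>v. X v \<noteq> {}"
    and sc: "\<And>v a b. a \<in> X v \<Longrightarrow> b \<in> X v \<Longrightarrow> sup a b \<in> X v"
  shows "eval_id (\<lambda>v. down (X v)) p = down {eval_lat x p | x. \<forall>v. x v \<in> X v}"
proof -
  have Psup: "\<forall>v. sup (x v) (y v) \<in> X v" if "\<forall>v. x v \<in> X v" "\<forall>v. y v \<in> X v" for x y
    using that sc by auto
  have ideal: "ideal_in UNIV (down {eval_lat x q | x. \<forall>v. x v \<in> X v})" for q
  proof (rule down_ideal)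
    define x0 where "x0 = (\<lambda>v. SOME b. b \<in> X v)"
    have "\<forall>v. x0 v \<in> X v" using ne unfolding x0_def by (simp add: some_in_eq)
    then have "eval_lat x0 q \<in> {eval_lat x q | x. \<forall>v. x v \<in> X v}" by blast
    then show "{eval_lat x q | x. \<forall>v. x v \<in> X v} \<noteq> {}" by blast
  next
    fix a b assume "a \<in> {eval_lat x q | x. \<forall>v. x v \<in> X v}" "b \<in> {eval_lat x q | x. \<forall>v. x v \<in> X v}"
    then obtain x y where xy: "\<forall>v. x v \<in> X v" "\<forall>v. y v \<in> X v" "a = eval_lat x q" "b = eval_lat y q"
      by auto
    let ?w = "\<lambda>v. sup (x v) (y v)"
    have "a \<le> eval_lat ?w q" "b \<le> eval_lat ?w q" using xy by (auto intro!: eval_mono)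
    then show "\<exists>c\<in>{eval_lat x q | x. \<forall>v. x v \<in> X v}. a \<le> c \<and> b \<le> c"
    proof (intro bexI conjI)
      show "eval_lat ?w q \<in> {eval_lat x q | x. \<forall>v. x v \<in> X v}" using Psup[OF xy(1,2)] by blast
    qed assumption+
  qed
  show ?thesis
  proof (induction p)
    case (Var v)
    show ?case
    proof
      show "eval_id (\<lambda>v. down (X v)) (Var v) \<subseteq> down {eval_lat x (Var v) | x. \<forall>v. x v \<in> X v}"
      proof
        fix z assume "z \<in> eval_id (\<lambda>v. down (X v)) (Var v)"
        then obtain a where a: "a \<in> X v" "z \<le> a" by (auto simp: down_def)
        let ?x = "\<lambda>w. if w = v then a else (SOME b. b \<in> X w)"
        have "\<forall>w. ?x w \<in> X w" using a ne by (simp add: some_in_eq)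
        moreover have "eval_lat ?x (Var v) = a" by simp
        ultimately have "a \<in> {eval_lat x (Var v) | x. \<forall>v. x v \<in> X v}"
          unfolding mem_Collect_eq by (intro exI[of _ ?x] conjI) simp_all
        then show "z \<in> down {eval_lat x (Var v) | x. \<forall>v. x v \<in> X v}"
          using a(2) unfolding down_def by blast
      qed
    next
      show "down {eval_lat x (Var v) | x. \<forall>v. x v \<in> X v} \<subseteq> eval_id (\<lambda>v. down (X v)) (Var v)"
        by (auto simp: down_def)
    qed
  next
    case (Join p q)
    have JJ: "eval_id (\<lambda>v. down (X v)) (Join p q) = {z. \<exists>a\<in>down {eval_lat x p | x. \<forall>v. x v \<in> X v}. \<exists>b\<in>down {eval_lat x q | x. \<forall>v. x v \<in> X v}. z \<le> sup a b}"
      using Join.IH id_join_ideals[OF ideal ideal] by simp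
    show ?case
    proof
      show "eval_id (\<lambda>v. down (X v)) (Join p q) \<subseteq> down {eval_lat x (Join p q) | x. \<forall>v. x v \<in> X v}"
      proof
        fix z assume "z \<in> eval_id (\<lambda>v. down (X v)) (Join p q)"
        then obtain a b where ab: "a \<in> down {eval_lat x p | x. \<forall>v. x v \<in> X v}"
          "b \<in> down {eval_lat x q | x. \<forall>v. x v \<in> X v}" "z \<le> sup a b"
          unfolding JJ by blast
        then obtain x y where xy: "\<forall>v. x v \<in> X v" "\<forall>v. y v \<in> X v" "a \<le> eval_lat x p" "b \<le> eval_lat y q"
          unfolding down_def by auto
        let ?w = "\<lambda>v. sup (x v) (y v)"
        have "eval_lat x p \<le> eval_lat ?w p" "eval_lat y q \<le> eval_lat ?w q" by (auto intro!: eval_mono)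
        have "sup a b \<le> sup (eval_lat ?w p) (eval_lat ?w q)"
          using xy(3,4) \<open>eval_lat x p \<le> eval_lat ?w p\<close> \<open>eval_lat y q \<le> eval_lat ?w q\<close>
          by (meson order_trans sup_mono)
        then have "z \<le> eval_lat ?w (Join p q)" using ab(3) by (metis eval_lat.simps(2) order.trans)
        then show "z \<in> down {eval_lat x (Join p q) | x. \<forall>v. x v \<in> X v}"
          using Psup[OF xy(1,2)] unfolding down_def by blast
      qed
    next
      show "down {eval_lat x (Join p q) | x. \<forall>v. x v \<in> X v} \<subseteq> eval_id (\<lambda>v. down (X v)) (Join p q)"
      proof
        fix z assume "z \<in> down {eval_lat x (Join p q) | x. \<forall>v. x v \<in> X v}"
        then obtain x where x: "\<forall>v. x v \<in> X v" "z \<le> sup (eval_lat x p) (eval_lat x q)"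
          unfolding down_def by auto
        have "eval_lat x p \<in> down {eval_lat x p | x. \<forall>v. x v \<in> X v}"
          "eval_lat x q \<in> down {eval_lat x q | x. \<forall>v. x v \<in> X v}"
          using x unfolding down_def by auto
        then show "z \<in> eval_id (\<lambda>v. down (X v)) (Join p q)"
          unfolding JJ using x(2) by blast
      qed
    qed
  next
    case (Meet p q)
    show ?case
    proof
      show "eval_id (\<lambda>v. down (X v)) (Meet p q) \<subseteq> down {eval_lat x (Meet p q) | x. \<forall>v. x v \<in> X v}"
      proof
        fix z assume "z \<in> eval_id (\<lambda>v. down (X v)) (Meet p q)"
        then have "z \<in> down {eval_lat x p | x. \<forall>v. x v \<in> X v}"
          "z \<in> down {eval_lat x q | x. \<forall>v. x v \<in> X v}"
          using Meet.IH by (simp_all add: id_meet_def)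
        then obtain x y where xy: "\<forall>v. x v \<in> X v" "\<forall>v. y v \<in> X v" "z \<le> eval_lat x p" "z \<le> eval_lat y q"
          unfolding down_def by auto
        let ?w = "\<lambda>v. sup (x v) (y v)"
        have "eval_lat x p \<le> eval_lat ?w p" "eval_lat y q \<le> eval_lat ?w q" by (auto intro!: eval_mono)
        then have "z \<le> eval_lat ?w (Meet p q)" using xy(3,4) by (simp add: le_infI order.trans)
        then show "z \<in> down {eval_lat x (Meet p q) | x. \<forall>v. x v \<in> X v}"
          using Psup[OF xy(1,2)] unfolding down_def by blast
      qed
    next
      show "down {eval_lat x (Meet p q) | x. \<forall>v. x v \<in> X v} \<subseteq> eval_id (\<lambda>v. down (X v)) (Meet p q)"
      proof
        fix z assume "z \<in> down {eval_lat x (Meet p q) | x. \<forall>v. x v \<in> X v}"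
        then obtain x where x: "\<forall>v. x v \<in> X v" "z \<le> inf (eval_lat x p) (eval_lat x q)"
          unfolding down_def by auto
        have "z \<in> down {eval_lat x p | x. \<forall>v. x v \<in> X v}"
          "z \<in> down {eval_lat x q | x. \<forall>v. x v \<in> X v}"
          using x unfolding down_def by auto
        then show "z \<in> eval_id (\<lambda>v. down (X v)) (Meet p q)"
          using Meet.IH by (simp_all add: id_meet_def)
      qed
    qed
  qed
qed

theorem lemma5p1:
  fixes LL :: "'i \<Rightarrow> 'a::bounded_lattice_bot set"
    and p :: "('i \<times> nat) lterm"
    and X :: "'i \<times> nat \<Rightarrow> 'a set"
  assumes disj: "\<And>i j. i \<noteq> j \<Longrightarrow> LL i \<inter> LL j = {bot}"
    and coprod: "is_coproduct0 LL TYPE('k)"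
    and X_ideal: "\<And>i n. ideal_in (LL i) (X (i, n))"
  shows "eval_id (\<lambda>(i, n). down (X (i, n))) p =
         down {eval_lat x p | x. \<forall>i n. x (i, n) \<in> X (i, n)}"
proof -
  have ne: "X v \<noteq> {}" for v
  proof (cases v)
    case (Pair i n) then show ?thesis using X_ideal[of i n] unfolding ideal_in_def by simp
  qed
  have sc: "sup a b \<in> X v" if "a \<in> X v" "b \<in> X v" for v a b
  proof (cases v)
    case (Pair i n) then show ?thesis using X_ideal[of i n] that unfolding ideal_in_def by simp
  qed
  have e1: "(\<lambda>(i, n). down (X (i, n))) = (\<lambda>v. down (X v))" by auto
  have e2: "(\<forall>i n. x (i, n) \<in> X (i, n)) \<longleftrightarrow> (\<forall>v. x v \<in> X v)" for x :: "'i \<times> nat \<Rightarrow> 'a" by auto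
  show ?thesis unfolding e1 e2 by (rule main_gen[OF ne sc])
qed

end
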